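(* Let $\mathfrak{n}$ be the real $7$-dimensional Lie algebra with basis $e_1,\dots,e_7$ whose nonzero brackets (up to antisymmetry) are $[e_1,e_2]=e_4$, $[e_1,e_4]=e_6$, $[e_1,e_6]=e_7$, $[e_2,e_3]=e_6$, $[e_2,e_4]=e_7$, $[e_3,e_4]=-e_7$, $[e_3,e_5]=-e_7$. Then $\mathfrak{n}$ is not an Einstein nilradical.
   Context: A real nilpotent Lie algebra $\mathfrak{n}$ is called an Einstein nilradical if it admits an inner product such that the left-invariant Riemannian metric it defines on the simply connected nilpotent Lie group with Lie algebra $\mathfrak{n}$ is a nilsoliton, i.e. its Ricci operator satisfies $\mathrm{Ric}=c\,\mathrm{Id}+D$ for some $c\in\mathbb{R}$ and some derivation $D$ of $\mathfrak{n}$. Brackets of basis elements not listed are zero. *)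

theory Defs
  imports "HOL-Analysis.Analysis" "HOL-Library.Numeral_Type"
begin

text \<open>A real Lie algebra structure on \<open>real^'n\<close> is given by a bracket
  \<open>br\<close>; vectors in \<open>real^'n\<close> are coordinate vectors w.r.t. the basis
  \<open>e_1, ..., e_n\<close>.\<close>

definition is_inner_product :: "('a::real_vector \<Rightarrow> 'a \<Rightarrow> real) \<Rightarrow> bool" where
  "is_inner_product ip \<longleftrightarrow> bilinear ip \<and> (\<forall>x y. ip x y = ip y x) \<and> (\<forall>x. x \<noteq> 0 \<longrightarrow> ip x x > 0)"

definition orthonormal_basis :: "('a::real_vector \<Rightarrow> 'a \<Rightarrow> real) \<Rightarrow> ('n::finite \<Rightarrow> 'a) \<Rightarrow> bool" where
  "orthonormal_basis ip u \<longleftrightarrow> (\<forall>i j. ip (u i) (u j) = (if i = j then 1 else 0)) \<and> span (range u) = UNIV"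

text \<open>Ricci form of the left-invariant metric defined by \<open>ip\<close> on the nilpotent Lie group,
  computed in an orthonormal basis \<open>u\<close>:
  \<open><Ric X, Y> = -1/2 sum_{i,j} <[X,u_i],u_j><[Y,u_i],u_j> + 1/4 sum_{i,j} <[u_i,u_j],X><[u_i,u_j],Y>\<close>.\<close>
definition ricci_form ::
  "(real^'n \<Rightarrow> real^'n \<Rightarrow> real^'n) \<Rightarrow> (real^'n \<Rightarrow> real^'n \<Rightarrow> real) \<Rightarrow> ('n::finite \<Rightarrow> real^'n)
     \<Rightarrow> real^'n \<Rightarrow> real^'n \<Rightarrow> real" where
  "ricci_form br ip u X Y =
     - (1/2) * (\<Sum>i\<in>UNIV. \<Sum>j\<in>UNIV. ip (br X (u i)) (u j) * ip (br Y (u i)) (u j))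
     + (1/4) * (\<Sum>i\<in>UNIV. \<Sum>j\<in>UNIV. ip (br (u i) (u j)) X * ip (br (u i) (u j)) Y)"

definition is_derivation :: "(real^'n \<Rightarrow> real^'n \<Rightarrow> real^'n) \<Rightarrow> (real^'n \<Rightarrow> real^'n) \<Rightarrow> bool" where
  "is_derivation br D \<longleftrightarrow> linear D \<and> (\<forall>x y. D (br x y) = br (D x) y + br x (D y))"

definition is_nilsoliton :: "(real^'n::finite \<Rightarrow> real^'n \<Rightarrow> real^'n) \<Rightarrow> (real^'n \<Rightarrow> real^'n \<Rightarrow> real) \<Rightarrow> bool" where
  "is_nilsoliton br ip \<longleftrightarrow>
     (\<exists>(u::'n \<Rightarrow> real^'n) Ric c D. orthonormal_basis ip u \<and> linear Ric \<and>
        (\<forall>X Y. ip (Ric X) Y = ricci_form br ip u X Y) \<and>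
        is_derivation br D \<and> (\<forall>X. Ric X = c *\<^sub>R X + D X))"

definition einstein_nilradical :: "(real^'n::finite \<Rightarrow> real^'n \<Rightarrow> real^'n) \<Rightarrow> bool" where
  "einstein_nilradical br \<longleftrightarrow> (\<exists>ip. is_inner_product ip \<and> is_nilsoliton br ip)"

text \<open>Standard basis \<open>e_1,...,e_7\<close> of \<open>real^7\<close>; component \<open>k\<close> is \<open>x $ k\<close>
  (the index \<open>7\<close> of type \<open>7\<close> is the numeral 7, equal to 0 in that type; all 7 indices distinct).\<close>
definition ee :: "7 \<Rightarrow> real^7" where "ee k = axis k 1"

text \<open>The bracket: bilinear extension of
  [e1,e2]=e4, [e1,e4]=e6, [e1,e6]=e7, [e2,e3]=e6, [e2,e4]=e7, [e3,e4]=-e7, [e3,e5]=-e7.\<close>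
definition brN :: "real^7 \<Rightarrow> real^7 \<Rightarrow> real^7" where
  "brN x y =
     (x$1 * y$2 - x$2 * y$1) *\<^sub>R ee 4
   + ((x$1 * y$4 - x$4 * y$1) + (x$2 * y$3 - x$3 * y$2)) *\<^sub>R ee 6
   + ((x$1 * y$6 - x$6 * y$1) + (x$2 * y$4 - x$4 * y$2)
      - (x$3 * y$4 - x$4 * y$3) - (x$3 * y$5 - x$5 * y$3)) *\<^sub>R ee 7"

end

theory Submission
  imports Defs
begin
lemma UNIV7: "(UNIV::7 set) = {1,2,3,4,5,6,7}"
proof -
  have "x \<in> {1,2,3,4,5,6,7}" for x :: 7
  proof (induct x)
    case (of_int z)
    then have "z = 0 \<or> z = 1 \<or> z = 2 \<or> z = 3 \<or> z = 4 \<or> z = 5 \<or> z = 6" by auto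
    then show ?case by (elim disjE) simp_all
  qed
  then show ?thesis by blast
qed

lemma sum7: "(\<Sum>k\<in>(UNIV::7 set). f k) = f 1 + (f 2 + (f 3 + (f 4 + (f 5 + (f 6 + f 7)))))"
  unfolding UNIV7 by (subst sum.insert, simp, simp)+ simp

lemma all7: "(\<forall>k::7. P k) \<longleftrightarrow> P 1 \<and> P 2 \<and> P 3 \<and> P 4 \<and> P 5 \<and> P 6 \<and> P 7"
  using UNIV7 by (metis UNIV_I empty_iff insert_iff)

lemma ipb: "is_inner_product ip \<Longrightarrow> bilinear ip"
  by (simp add: is_inner_product_def)
lemma ip_sym: "is_inner_product ip \<Longrightarrow> ip x y = ip y x"
  by (simp add: is_inner_product_def)
lemma ip_pos: "is_inner_product ip \<Longrightarrow> x \<noteq> 0 \<Longrightarrow> ip x x > 0"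
  by (simp add: is_inner_product_def)
lemma ip_linL: "is_inner_product ip \<Longrightarrow> linear (\<lambda>x. ip x z)"
  by (simp add: is_inner_product_def bilinear_def)
lemma ip_linR: "is_inner_product ip \<Longrightarrow> linear (\<lambda>x. ip z x)"
  by (simp add: is_inner_product_def bilinear_def)

lemma ip_sumL: "is_inner_product ip \<Longrightarrow> ip (\<Sum>l\<in>A. f l) z = (\<Sum>l\<in>A. ip (f l) z)"
  using linear_sum[OF ip_linL] by blast
lemma ip_sumR: "is_inner_product ip \<Longrightarrow> ip z (\<Sum>l\<in>A. f l) = (\<Sum>l\<in>A. ip z (f l))"
  using linear_sum[OF ip_linR] by blast
lemma ip_scaleL: assumes "is_inner_product ip" shows "ip (a *\<^sub>R x) z = a * ip x z"
  using bilinear_lmul[OF ipb[OF assms]] by simp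
lemma ip_scaleR: assumes "is_inner_product ip" shows "ip z (a *\<^sub>R x) = a * ip z x"
  using bilinear_rmul[OF ipb[OF assms]] by simp
lemma ip_addL: assumes "is_inner_product ip" shows "ip (x + y) z = ip x z + ip y z"
  using bilinear_ladd[OF ipb[OF assms]] by simp
lemma ip_addR: assumes "is_inner_product ip" shows "ip z (x + y) = ip z x + ip z y"
  using bilinear_radd[OF ipb[OF assms]] by simp
lemma ip_diffL: assumes "is_inner_product ip" shows "ip (x - y) z = ip x z - ip y z"
  using bilinear_lsub[OF ipb[OF assms]] by simp
lemma ip_diffR: assumes "is_inner_product ip" shows "ip z (x - y) = ip z x - ip z y"
  using bilinear_rsub[OF ipb[OF assms]] by simp
lemma ip_negL: assumes "is_inner_product ip" shows "ip (- x) z = - ip x z"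
  using bilinear_lneg[OF ipb[OF assms]] by simp
lemma ip_negR: assumes "is_inner_product ip" shows "ip z (- x) = - ip z x"
  using bilinear_rneg[OF ipb[OF assms]] by simp
lemma ip_zeroL: assumes "is_inner_product ip" shows "ip 0 z = 0"
  using bilinear_lzero[OF ipb[OF assms]] by simp
lemma ip_zeroR: assumes "is_inner_product ip" shows "ip z 0 = 0"
  using bilinear_rzero[OF ipb[OF assms]] by simp
lemma ip_nonneg: "is_inner_product ip \<Longrightarrow> ip x x \<ge> 0"
  by (cases "x = 0") (auto simp: ip_zeroL dest: ip_pos)

lemmas ip_simps = ip_scaleL ip_scaleR ip_addL ip_addR ip_diffL ip_diffR ip_negL ip_negR
  ip_zeroL ip_zeroR ip_sumL ip_sumR

definition orthonormal7 :: "(real^7 \<Rightarrow> real^7 \<Rightarrow> real) \<Rightarrow> (7 \<Rightarrow> real^7) \<Rightarrow> bool" where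
  "orthonormal7 ip y \<longleftrightarrow> (\<forall>i j. ip (y i) (y j) = (if i = j then 1 else 0))"

lemma onb_expand:
  assumes ipi: "is_inner_product ip" and onb: "orthonormal_basis ip u"
  shows "x = (\<Sum>l\<in>UNIV. ip x (u l) *\<^sub>R u l)"
proof -
  have on: "ip (u i) (u j) = (if i = j then 1 else 0)" for i j
    using onb by (simp add: orthonormal_basis_def)
  have inj: "inj u"
  proof (rule injI)
    fix i j assume "u i = u j"
    then have "ip (u i) (u j) = 1" using on[of j j] by simp
    then show "i = j" using on[of i j] by (auto split: if_splits)
  qed
  have "x \<in> span (range u)" using onb by (simp add: orthonormal_basis_def)
  then obtain c where c: "x = (\<Sum>v\<in>range u. c v *\<^sub>R v)"
    using real_vector.span_finite[of "range u"] by auto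
  then have cx: "x = (\<Sum>l\<in>UNIV. c (u l) *\<^sub>R u l)"
    by (simp add: sum.reindex[OF inj])
  have "ip x (u m) = c (u m)" for m
  proof -
    have "ip x (u m) = (\<Sum>l\<in>UNIV. c (u l) * ip (u l) (u m))"
      by (subst cx) (simp add: ip_simps[OF ipi])
    also have "\<dots> = (\<Sum>l\<in>UNIV. if l = m then c (u m) else 0)"
      by (rule sum.cong) (auto simp: on)
    finally show ?thesis by simp
  qed
  then show ?thesis using cx by simp
qed

lemma onb_parseval:
  assumes ipi: "is_inner_product ip" and onb: "orthonormal_basis ip u"
  shows "ip x z = (\<Sum>l\<in>UNIV. ip x (u l) * ip z (u l))"
proof -
  have "ip x z = ip (\<Sum>l\<in>UNIV. ip x (u l) *\<^sub>R u l) z"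
    using onb_expand[OF ipi onb, of x] by simp
  also have "\<dots> = (\<Sum>l\<in>UNIV. ip x (u l) * ip z (u l))"
    by (simp add: ip_simps[OF ipi] ip_sym[OF ipi, of "u _" z])
  finally show ?thesis .
qed

lemma ee_comp: "ee k $ i = (if i = k then 1 else 0)"
  by (simp add: ee_def axis_def)

lemma basis_exp: "x = (\<Sum>j\<in>UNIV. x $ j *\<^sub>R ee j)"
  by (simp add: vec_eq_iff sum_component ee_comp if_distrib[of "\<lambda>r. _ * r"] cong: if_cong)

lemma brN_comp: "brN x y $ i =
   (if i = 4 then x$1 * y$2 - x$2 * y$1
    else if i = 6 then (x$1 * y$4 - x$4 * y$1) + (x$2 * y$3 - x$3 * y$2)
    else if i = 7 then (x$1 * y$6 - x$6 * y$1) + (x$2 * y$4 - x$4 * y$2)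
      - (x$3 * y$4 - x$4 * y$3) - (x$3 * y$5 - x$5 * y$3)
    else 0)"
  by (simp add: brN_def ee_comp)

lemma brN_antisym: "brN x y = - brN y x"
  by (simp add: vec_eq_iff brN_comp algebra_simps)

lemma brN_self: "brN x x = 0"
  by (simp add: vec_eq_iff brN_comp algebra_simps)

lemma brN_linR: "linear (\<lambda>y. brN x y)"
  by (rule linearI) (simp_all add: vec_eq_iff brN_comp algebra_simps)

lemma brN_linL: "linear (\<lambda>x. brN x y)"
  by (rule linearI) (simp_all add: vec_eq_iff brN_comp algebra_simps)

lemma brN_bil: "bilinear brN"
  using brN_linR brN_linL by (simp add: bilinear_def)

lemma brN_scaleL: "brN (a *\<^sub>R x) y = a *\<^sub>R brN x y"
  using linear_scale[OF brN_linL] by blast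
lemma brN_scaleR: "brN x (a *\<^sub>R y) = a *\<^sub>R brN x y"
  using linear_scale[OF brN_linR] by blast
lemma brN_addL: "brN (x + z) y = brN x y + brN z y"
  using linear_add[OF brN_linL] by blast
lemma brN_addR: "brN x (y + z) = brN x y + brN x z"
  using linear_add[OF brN_linR] by blast
lemma brN_diffL: "brN (x - z) y = brN x y - brN z y"
  using linear_diff[OF brN_linL] by blast
lemma brN_diffR: "brN x (y - z) = brN x y - brN x z"
  using linear_diff[OF brN_linR] by blast
lemma brN_sumL: "brN (\<Sum>l\<in>A. f l) y = (\<Sum>l\<in>A. brN (f l) y)"
  using linear_sum[OF brN_linL] by blast
lemma brN_sumR: "brN x (\<Sum>l\<in>A. f l) = (\<Sum>l\<in>A. brN x (f l))"
  using linear_sum[OF brN_linR] by blast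

lemma linear_comp_apply: "linear f \<Longrightarrow> linear g \<Longrightarrow> linear (\<lambda>x. f (g x))"
  using linear_compose[of g f] by (simp add: o_def)

lemma bil_ip_comp:
  assumes ipi: "is_inner_product ip" and F: "linear F" and G: "linear G"
  shows "bilinear (\<lambda>x z. ip (F x) (G z))"
  unfolding bilinear_def
  by (auto intro!: linear_comp_apply[OF ip_linR[OF ipi] G] linear_comp_apply[OF ip_linL[OF ipi] F])

lemma bil_prod:
  fixes f g :: "real^7 \<Rightarrow> real"
  assumes F: "linear f" and G: "linear g"
  shows "bilinear (\<lambda>x z. f x * g z)"
  unfolding bilinear_def
proof safe
  fix x show "linear (\<lambda>z. f x * g z)"
    using linear_compose_scale_right[OF G, of "f x"] by (simp add: o_def)
next
  fix z show "linear (\<lambda>x. f x * g z)"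
    using linear_compose_scale_right[OF F, of "g z"] by (simp add: o_def mult.commute)
qed

lemma trace_e:
  assumes ipi: "is_inner_product ip" and onb: "orthonormal_basis ip u" and M: "linear M"
  shows "(\<Sum>l\<in>UNIV. ip (M (u l)) (u l)) = (\<Sum>j\<in>UNIV. M (ee j) $ j)"
proof -
  have Mu: "M (u l) = (\<Sum>j\<in>UNIV. u l $ j *\<^sub>R M (ee j))" for l
  proof -
    have "M (u l) = M (\<Sum>j\<in>UNIV. u l $ j *\<^sub>R ee j)" using basis_exp[of "u l"] by simp
    also have "\<dots> = (\<Sum>j\<in>UNIV. u l $ j *\<^sub>R M (ee j))"
      by (simp add: linear_sum[OF M] linear_scale[OF M])
    finally show ?thesis .
  qed
  have "(\<Sum>l\<in>UNIV. ip (M (u l)) (u l)) = (\<Sum>l\<in>UNIV. \<Sum>j\<in>UNIV. u l $ j * ip (M (ee j)) (u l))"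
    by (simp add: Mu ip_simps[OF ipi])
  also have "\<dots> = (\<Sum>j\<in>UNIV. \<Sum>l\<in>UNIV. u l $ j * ip (M (ee j)) (u l))"
    by (rule sum.swap)
  also have "\<dots> = (\<Sum>j\<in>UNIV. (\<Sum>l\<in>UNIV. ip (M (ee j)) (u l) *\<^sub>R u l) $ j)"
    by (simp add: sum_component mult.commute)
  also have "\<dots> = (\<Sum>j\<in>UNIV. M (ee j) $ j)"
    using onb_expand[OF ipi onb] by simp
  finally show ?thesis .
qed

lemma trace_inv:
  fixes u y :: "7 \<Rightarrow> real^7" and g :: "real^7 \<Rightarrow> real^7 \<Rightarrow> real"
  assumes ipi: "is_inner_product ip" and onb: "orthonormal_basis ip u"
    and ony: "orthonormal7 ip y" and g: "bilinear g"
  shows "(\<Sum>l\<in>UNIV. g (u l) (u l)) = (\<Sum>l\<in>UNIV. g (y l) (y l))"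
proof -
  define Q :: "real^7^7" where "Q = (\<chi> m l. ip (y m) (u l))"
  have yexp: "y m = (\<Sum>l\<in>UNIV. Q $ m $ l *\<^sub>R u l)" for m
    using onb_expand[OF ipi onb, of "y m"] by (simp add: Q_def)
  have "Q ** transpose Q = mat 1"
  proof -
    have "(\<Sum>l\<in>UNIV. Q $ m $ l * Q $ m' $ l) = (if m = m' then 1 else 0)" for m m'
      using onb_parseval[OF ipi onb, of "y m" "y m'"] ony
      by (simp add: Q_def orthonormal7_def)
    then show ?thesis
      by (simp add: vec_eq_iff matrix_matrix_mult_def transpose_def mat_def)
  qed
  then have "transpose Q ** Q = mat 1" by (simp add: matrix_left_right_inverse)
  then have col: "(\<Sum>m\<in>UNIV. Q $ m $ l * Q $ m $ l') = (if l = l' then 1 else 0)" for l l'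
    by (simp add: vec_eq_iff matrix_matrix_mult_def transpose_def mat_def)
  have gl: "linear (\<lambda>x. g x z)" for z using g by (simp add: bilinear_def)
  have gr: "linear (\<lambda>z. g x z)" for x using g by (simp add: bilinear_def)
  have "g (y m) (y m) = (\<Sum>l\<in>UNIV. \<Sum>l'\<in>UNIV. Q $ m $ l * Q $ m $ l' * g (u l) (u l'))" for m
  proof -
    have "g (y m) (y m) = (\<Sum>l\<in>UNIV. Q $ m $ l * g (u l) (y m))"
      by (subst yexp[of m]) (simp add: linear_sum[OF gl] linear_scale[OF gl])
    also have "\<dots> = (\<Sum>l\<in>UNIV. Q $ m $ l * (\<Sum>l'\<in>UNIV. Q $ m $ l' * g (u l) (u l')))"
      by (simp only: yexp[of m]) (simp add: linear_sum[OF gr] linear_scale[OF gr])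
    finally show ?thesis by (simp add: sum_distrib_left mult.assoc)
  qed
  then have "(\<Sum>m\<in>UNIV. g (y m) (y m)) =
      (\<Sum>m\<in>UNIV. \<Sum>l\<in>UNIV. \<Sum>l'\<in>UNIV. Q $ m $ l * Q $ m $ l' * g (u l) (u l'))" by simp
  also have "\<dots> = (\<Sum>l\<in>UNIV. \<Sum>m\<in>UNIV. \<Sum>l'\<in>UNIV. Q $ m $ l * Q $ m $ l' * g (u l) (u l'))"
    by (rule sum.swap)
  also have "\<dots> = (\<Sum>l\<in>UNIV. \<Sum>l'\<in>UNIV. \<Sum>m\<in>UNIV. Q $ m $ l * Q $ m $ l' * g (u l) (u l'))"
    by (rule sum.cong[OF refl], rule sum.swap)
  also have "\<dots> = (\<Sum>l\<in>UNIV. \<Sum>l'\<in>UNIV. (if l = l' then 1 else 0) * g (u l) (u l'))"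
    by (simp add: sum_distrib_right[symmetric] col)
  also have "\<dots> = (\<Sum>l\<in>UNIV. g (u l) (u l))"
    by (simp add: if_distrib[of "\<lambda>r. r * _"] sum.delta cong: if_cong)
  finally show ?thesis by simp
qed

section \<open>Derivations of the algebra\<close>

definition degv :: "7 \<Rightarrow> real" where
  "degv k = (if k = 1 then 1 else if k = 2 \<or> k = 3 then 2 else if k = 4 \<or> k = 5 then 3
             else if k = 6 then 4 else 5)"

definition tri :: "(7 \<Rightarrow> 7 \<Rightarrow> real) \<Rightarrow> bool" where
  "tri d \<longleftrightarrow> (\<forall>k. d k k = degv k * d 1 1) \<and> (\<forall>i j. j \<noteq> i \<and> degv i \<le> degv j \<longrightarrow> d i j = 0)"

lemma Dx: assumes lin: "linear D" shows "(D x) $ i = (\<Sum>j\<in>UNIV. D (ee j) $ i * x $ j)"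
proof -
  have "D x = D (\<Sum>j\<in>UNIV. x $ j *\<^sub>R ee j)" using basis_exp[of x] by simp
  also have "\<dots> = (\<Sum>j\<in>UNIV. x $ j *\<^sub>R D (ee j))"
    by (simp add: linear_sum[OF lin] linear_scale[OF lin])
  finally show ?thesis by (simp add: sum_component mult.commute)
qed

lemma der_tri:
  assumes der: "is_derivation brN D"
  shows "tri (\<lambda>i j. D (ee j) $ i)"
proof -
  define d where "d i j = D (ee j) $ i" for i j
  have lin: "linear D" using der by (simp add: is_derivation_def)
  have Dx': "(D x) $ i = (\<Sum>j\<in>UNIV. d i j * x $ j)" for x i
    unfolding d_def by (rule Dx[OF lin])
  have deq: "D (brN (ee a) (ee b)) $ i = brN (D (ee a)) (ee b) $ i + brN (ee a) (D (ee b)) $ i" for a b i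
    using der by (simp add: is_derivation_def)
  note S = Dx' sum7 brN_comp ee_comp
  have e_1_4_6: "(1 * d 6 6) + (-1 * d 1 1) + (-1 * d 4 4) = 0"
    using deq[of 1 4 6] by (simp add: S, linarith?)
  have e_1_6_7: "(1 * d 7 7) + (-1 * d 1 1) + (-1 * d 6 6) = 0"
    using deq[of 1 6 7] by (simp add: S, linarith?)
  have e_2_5_7: "(1 * d 3 2) + (-1 * d 4 5) = 0"
    using deq[of 2 5 7] by (simp add: S, linarith?)
  have e_1_5_6: "(-1 * d 4 5) = 0"
    using deq[of 1 5 6] by (simp add: S, linarith?)
  have e_2_4_7: "(1 * d 7 7) + (-1 * d 2 2) + (1 * d 3 2) + (-1 * d 4 4) = 0"
    using deq[of 2 4 7] by (simp add: S, linarith?)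
  have e_1_2_4: "(1 * d 4 4) + (-1 * d 1 1) + (-1 * d 2 2) = 0"
    using deq[of 1 2 4] by (simp add: S, linarith?)
  have e_2_3_6: "(1 * d 6 6) + (-1 * d 2 2) + (-1 * d 3 3) = 0"
    using deq[of 2 3 6] by (simp add: S, linarith?)
  have e_3_5_7: "(-1 * d 7 7) + (1 * d 3 3) + (1 * d 4 5) + (1 * d 5 5) = 0"
    using deq[of 3 5 7] by (simp add: S, linarith?)
  have e_2_4_6: "(1 * d 6 7) + (-1 * d 1 2) + (-1 * d 3 4) = 0"
    using deq[of 2 4 6] by (simp add: S, linarith?)
  have e_1_2_3: "(1 * d 3 4) = 0"
    using deq[of 1 2 3] by (simp add: S, linarith?)
  have e_1_6_6: "(1 * d 6 7) + (-1 * d 4 6) = 0"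
    using deq[of 1 6 6] by (simp add: S, linarith?)
  have e_1_4_4: "(1 * d 4 6) + (-1 * d 2 4) = 0"
    using deq[of 1 4 4] by (simp add: S, linarith?)
  have e_1_2_2: "(1 * d 2 4) = 0"
    using deq[of 1 2 2] by (simp add: S, linarith?)
  have e_2_3_4: "(1 * d 4 6) + (1 * d 1 3) = 0"
    using deq[of 2 3 4] by (simp add: S, linarith?)
  have e_1_2_1: "(1 * d 1 4) = 0"
    using deq[of 1 2 1] by (simp add: S, linarith?)
  have e_2_5_4: "(1 * d 1 5) = 0"
    using deq[of 2 5 4] by (simp add: S, linarith?)
  have e_1_4_1: "(1 * d 1 6) = 0"
    using deq[of 1 4 1] by (simp add: S, linarith?)
  have e_1_6_1: "(1 * d 1 7) = 0"
    using deq[of 1 6 1] by (simp add: S, linarith?)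
  have e_1_3_4: "(-1 * d 2 3) = 0"
    using deq[of 1 3 4] by (simp add: S, linarith?)
  have e_1_5_4: "(-1 * d 2 5) = 0"
    using deq[of 1 5 4] by (simp add: S, linarith?)
  have e_1_4_2: "(1 * d 2 6) = 0"
    using deq[of 1 4 2] by (simp add: S, linarith?)
  have e_1_6_2: "(1 * d 2 7) = 0"
    using deq[of 1 6 2] by (simp add: S, linarith?)
  have e_2_5_6: "(-1 * d 3 5) = 0"
    using deq[of 2 5 6] by (simp add: S, linarith?)
  have e_1_4_3: "(1 * d 3 6) = 0"
    using deq[of 1 4 3] by (simp add: S, linarith?)
  have e_1_6_3: "(1 * d 3 7) = 0"
    using deq[of 1 6 3] by (simp add: S, linarith?)
  have e_1_6_4: "(1 * d 4 7) + (-1 * d 2 6) = 0"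
    using deq[of 1 6 4] by (simp add: S, linarith?)
  have e_1_2_5: "(1 * d 5 4) = 0"
    using deq[of 1 2 5] by (simp add: S, linarith?)
  have e_1_4_5: "(1 * d 5 6) = 0"
    using deq[of 1 4 5] by (simp add: S, linarith?)
  have e_1_6_5: "(1 * d 5 7) = 0"
    using deq[of 1 6 5] by (simp add: S, linarith?)
  have t0: "d 2 2 = 2 * d 1 1" using e_1_4_6 e_1_6_7 e_2_5_7 e_1_5_6 e_2_4_7 by linarith
  have t1: "d 3 3 = 2 * d 1 1" using e_1_2_4 e_1_4_6 e_2_3_6 by linarith
  have t2: "d 4 4 = 3 * d 1 1" using e_1_2_4 e_1_4_6 e_1_6_7 e_2_5_7 e_1_5_6 e_2_4_7 by linarith
  have t3: "d 5 5 = 3 * d 1 1" using e_1_4_6 e_1_6_7 e_2_5_7 e_2_4_7 e_3_5_7 e_2_3_6 by linarith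
  have t4: "d 6 6 = 4 * d 1 1" using e_1_2_4 e_1_4_6 e_1_6_7 e_2_5_7 e_1_5_6 e_2_4_7 by linarith
  have t5: "d 7 7 = 5 * d 1 1" using e_1_2_4 e_1_4_6 e_1_6_7 e_2_5_7 e_1_5_6 e_2_4_7 by linarith
  have t6: "d 1 2 = 0" using e_2_4_6 e_1_2_3 e_1_6_6 e_1_4_4 e_1_2_2 by linarith
  have t7: "d 1 3 = 0" using e_2_3_4 e_1_4_4 e_1_2_2 by linarith
  have t8: "d 1 4 = 0" using e_1_2_1 by linarith
  have t9: "d 1 5 = 0" using e_2_5_4 by linarith
  have t10: "d 1 6 = 0" using e_1_4_1 by linarith
  have t11: "d 1 7 = 0" using e_1_6_1 by linarith
  have t12: "d 2 3 = 0" using e_1_3_4 by linarith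
  have t13: "d 2 4 = 0" using e_1_2_2 by linarith
  have t14: "d 2 5 = 0" using e_1_5_4 by linarith
  have t15: "d 2 6 = 0" using e_1_4_2 by linarith
  have t16: "d 2 7 = 0" using e_1_6_2 by linarith
  have t17: "d 3 2 = 0" using e_2_5_7 e_1_5_6 by linarith
  have t18: "d 3 4 = 0" using e_1_2_3 by linarith
  have t19: "d 3 5 = 0" using e_2_5_6 by linarith
  have t20: "d 3 6 = 0" using e_1_4_3 by linarith
  have t21: "d 3 7 = 0" using e_1_6_3 by linarith
  have t22: "d 4 5 = 0" using e_1_5_6 by linarith
  have t23: "d 4 6 = 0" using e_1_4_4 e_1_2_2 by linarith
  have t24: "d 4 7 = 0" using e_1_6_4 e_1_4_2 by linarith
  have t25: "d 5 4 = 0" using e_1_2_5 by linarith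
  have t26: "d 5 6 = 0" using e_1_4_5 by linarith
  have t27: "d 5 7 = 0" using e_1_6_5 by linarith
  have t28: "d 6 7 = 0" using e_1_6_6 e_1_4_4 e_1_2_2 by linarith
  have dd: "(\<lambda>i j. D (ee j) $ i) = d" by (simp add: d_def fun_eq_iff)
  show ?thesis unfolding dd tri_def
    apply (intro conjI)
     apply (simp add: all7 degv_def t0 t1 t2 t3 t4 t5)
    apply (simp add: all7 degv_def t6 t7 t8 t9 t10 t11 t12 t13 t14 t15 t16 t17 t18 t19 t20 t21 t22 t23 t24 t25 t26 t27 t28)
    done
qed

lemma swap3:
  fixes f :: "7 \<Rightarrow> 7 \<Rightarrow> 7 \<Rightarrow> real"
  shows "(\<Sum>l\<in>UNIV. \<Sum>i\<in>UNIV. \<Sum>j\<in>UNIV. f l i j) = (\<Sum>i\<in>UNIV. \<Sum>j\<in>UNIV. \<Sum>l\<in>UNIV. f l i j)"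
proof -
  have "(\<Sum>l\<in>UNIV. \<Sum>i\<in>UNIV. \<Sum>j\<in>UNIV. f l i j) = (\<Sum>i\<in>UNIV. \<Sum>l\<in>UNIV. \<Sum>j\<in>UNIV. f l i j)"
    by (rule sum.swap)
  also have "\<dots> = (\<Sum>i\<in>UNIV. \<Sum>j\<in>UNIV. \<Sum>l\<in>UNIV. f l i j)"
    by (rule sum.cong[OF refl], rule sum.swap)
  finally show ?thesis .
qed

lemma ricci_trace:
  fixes u :: "7 \<Rightarrow> real^7"
  assumes ipi: "is_inner_product ip" and onb: "orthonormal_basis ip u" and A: "linear A"
  shows "(\<Sum>l\<in>UNIV. ricci_form brN ip u (A (u l)) (u l)) =
     - (1/2) * (\<Sum>l\<in>UNIV. \<Sum>i\<in>UNIV. ip (brN (A (u l)) (u i)) (brN (u l) (u i)))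
     + (1/4) * (\<Sum>i\<in>UNIV. \<Sum>j\<in>UNIV. ip (brN (u i) (u j)) (A (brN (u i) (u j))))"
proof -
  have P: "(\<Sum>j\<in>UNIV. ip a (u j) * ip b (u j)) = ip a b" for a b
    by (rule onb_parseval[OF ipi onb, symmetric])
  have Q: "(\<Sum>l\<in>UNIV. ip w (A (u l)) * ip w (u l)) = ip w (A w)" for w
  proof -
    have "A w = A (\<Sum>l\<in>UNIV. ip w (u l) *\<^sub>R u l)" using onb_expand[OF ipi onb, of w] by simp
    also have "\<dots> = (\<Sum>l\<in>UNIV. ip w (u l) *\<^sub>R A (u l))"
      by (simp add: linear_sum[OF A] linear_scale[OF A])
    finally show ?thesis by (simp add: ip_simps[OF ipi] mult.commute)
  qed
  have "(\<Sum>l\<in>UNIV. ricci_form brN ip u (A (u l)) (u l)) =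
     (\<Sum>l\<in>UNIV. - (1/2) * (\<Sum>i\<in>UNIV. ip (brN (A (u l)) (u i)) (brN (u l) (u i)))
        + (1/4) * (\<Sum>i\<in>UNIV. \<Sum>j\<in>UNIV. ip (brN (u i) (u j)) (A (u l)) * ip (brN (u i) (u j)) (u l)))"
    by (simp add: ricci_form_def P)
  also have "\<dots> = - (1/2) * (\<Sum>l\<in>UNIV. \<Sum>i\<in>UNIV. ip (brN (A (u l)) (u i)) (brN (u l) (u i)))
        + (1/4) * (\<Sum>l\<in>UNIV. \<Sum>i\<in>UNIV. \<Sum>j\<in>UNIV. ip (brN (u i) (u j)) (A (u l)) * ip (brN (u i) (u j)) (u l))"
    by (simp add: sum.distrib sum_distrib_left)
  also have "(\<Sum>l\<in>UNIV. \<Sum>i\<in>UNIV. \<Sum>j\<in>UNIV. ip (brN (u i) (u j)) (A (u l)) * ip (brN (u i) (u j)) (u l))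
      = (\<Sum>i\<in>UNIV. \<Sum>j\<in>UNIV. \<Sum>l\<in>UNIV. ip (brN (u i) (u j)) (A (u l)) * ip (brN (u i) (u j)) (u l))"
    by (rule swap3)
  also have "\<dots> = (\<Sum>i\<in>UNIV. \<Sum>j\<in>UNIV. ip (brN (u i) (u j)) (A (brN (u i) (u j))))"
    by (simp add: Q)
  finally show ?thesis .
qed

lemma ricci_trace_der:
  fixes u :: "7 \<Rightarrow> real^7"
  assumes ipi: "is_inner_product ip" and onb: "orthonormal_basis ip u" and A: "is_derivation brN A"
  shows "(\<Sum>l\<in>UNIV. ricci_form brN ip u (A (u l)) (u l)) = 0"
proof -
  have lin: "linear A" using A by (simp add: is_derivation_def)
  have Ab: "A (brN x y) = brN (A x) y + brN x (A y)" for x y using A by (simp add: is_derivation_def)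
  define X where "X = (\<Sum>l\<in>UNIV. \<Sum>i\<in>UNIV. ip (brN (A (u l)) (u i)) (brN (u l) (u i)))"
  have s2: "(\<Sum>i\<in>UNIV. \<Sum>j\<in>UNIV. ip (brN (u i) (u j)) (brN (u i) (A (u j)))) = X"
  proof -
    have "(\<Sum>i\<in>UNIV. \<Sum>j\<in>UNIV. ip (brN (u i) (u j)) (brN (u i) (A (u j))))
        = (\<Sum>i\<in>UNIV. \<Sum>j\<in>UNIV. ip (brN (A (u j)) (u i)) (brN (u j) (u i)))"
    proof (rule sum.cong[OF refl], rule sum.cong[OF refl])
      fix i j
      have "ip (brN (u i) (u j)) (brN (u i) (A (u j))) = ip (- brN (u j) (u i)) (- brN (A (u j)) (u i))"
        using brN_antisym[of "u i" "u j"] brN_antisym[of "u i" "A (u j)"] by simp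
      also have "\<dots> = ip (brN (u j) (u i)) (brN (A (u j)) (u i))"
        by (simp add: ip_negL[OF ipi] ip_negR[OF ipi])
      also have "\<dots> = ip (brN (A (u j)) (u i)) (brN (u j) (u i))"
        by (rule ip_sym[OF ipi])
      finally show "ip (brN (u i) (u j)) (brN (u i) (A (u j))) = ip (brN (A (u j)) (u i)) (brN (u j) (u i))" .
    qed
    also have "\<dots> = X" unfolding X_def by (rule sum.swap)
    finally show ?thesis .
  qed
  have s1: "(\<Sum>i\<in>UNIV. \<Sum>j\<in>UNIV. ip (brN (u i) (u j)) (brN (A (u i)) (u j))) = X"
    unfolding X_def by (rule sum.cong[OF refl], rule sum.cong[OF refl], rule ip_sym[OF ipi])
  have "(\<Sum>i\<in>UNIV. \<Sum>j\<in>UNIV. ip (brN (u i) (u j)) (A (brN (u i) (u j)))) = 2 * X"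
    by (simp add: Ab ip_simps[OF ipi] sum.distrib s1 s2)
  then show ?thesis
    by (simp add: ricci_trace[OF ipi onb lin] X_def[symmetric])
qed

lemma ricci_trace_id:
  fixes u :: "7 \<Rightarrow> real^7"
  assumes ipi: "is_inner_product ip" and onb: "orthonormal_basis ip u"
  shows "(\<Sum>l\<in>UNIV. ricci_form brN ip u (u l) (u l)) =
     - (1/4) * (\<Sum>l\<in>UNIV. \<Sum>i\<in>UNIV. ip (brN (u l) (u i)) (brN (u l) (u i)))"
  using ricci_trace[OF ipi onb linear_id] by (simp add: id_def)

definition phi0 :: "real^7 \<Rightarrow> real^7" where
  "phi0 x = (\<chi> i. degv i * x $ i)"

lemma phi0_der: "is_derivation brN phi0"
  unfolding is_derivation_def
proof safe
  show "linear phi0"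
    by (rule linearI) (simp_all add: phi0_def vec_eq_iff algebra_simps)
  fix x y
  show "phi0 (brN x y) = brN (phi0 x) y + brN x (phi0 y)"
    by (simp add: phi0_def vec_eq_iff brN_comp degv_def algebra_simps)
qed

definition vec7 :: "real \<Rightarrow> real \<Rightarrow> real \<Rightarrow> real \<Rightarrow> real \<Rightarrow> real \<Rightarrow> real \<Rightarrow> real^7" where
  "vec7 a1 a2 a3 a4 a5 a6 a7 = (\<chi> i. if i = 1 then a1 else if i = 2 then a2 else if i = 3 then a3
     else if i = 4 then a4 else if i = 5 then a5 else if i = 6 then a6 else a7)"

lemma vec7_1[simp]: "vec7 a1 a2 a3 a4 a5 a6 a7 $ 1 = a1" by (simp add: vec7_def)
lemma vec7_2[simp]: "vec7 a1 a2 a3 a4 a5 a6 a7 $ 2 = a2" by (simp add: vec7_def)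
lemma vec7_3[simp]: "vec7 a1 a2 a3 a4 a5 a6 a7 $ 3 = a3" by (simp add: vec7_def)
lemma vec7_4[simp]: "vec7 a1 a2 a3 a4 a5 a6 a7 $ 4 = a4" by (simp add: vec7_def)
lemma vec7_5[simp]: "vec7 a1 a2 a3 a4 a5 a6 a7 $ 5 = a5" by (simp add: vec7_def)
lemma vec7_6[simp]: "vec7 a1 a2 a3 a4 a5 a6 a7 $ 6 = a6" by (simp add: vec7_def)
lemma vec7_7[simp]: "vec7 a1 a2 a3 a4 a5 a6 a7 $ 7 = a7" by (simp add: vec7_def)

lemma tri_zero: "tri d \<Longrightarrow> j \<noteq> i \<Longrightarrow> degv i \<le> degv j \<Longrightarrow> d i j = 0"
  unfolding tri_def by blast
lemma tri_diag: "tri d \<Longrightarrow> d k k = degv k * d 1 1"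
  unfolding tri_def by blast

lemma tri_facts:
  assumes tr: "tri d"
  shows
    "d 1 2 = 0"
    "d 1 3 = 0"
    "d 1 4 = 0"
    "d 1 5 = 0"
    "d 1 6 = 0"
    "d 1 7 = 0"
    "d 2 3 = 0"
    "d 2 4 = 0"
    "d 2 5 = 0"
    "d 2 6 = 0"
    "d 2 7 = 0"
    "d 3 2 = 0"
    "d 3 4 = 0"
    "d 3 5 = 0"
    "d 3 6 = 0"
    "d 3 7 = 0"
    "d 4 5 = 0"
    "d 4 6 = 0"
    "d 4 7 = 0"
    "d 5 4 = 0"
    "d 5 6 = 0"
    "d 5 7 = 0"
    "d 6 7 = 0"
    "d 2 2 = 2 * d 1 1"
    "d 3 3 = 2 * d 1 1"
    "d 4 4 = 3 * d 1 1"
    "d 5 5 = 3 * d 1 1"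
    "d 6 6 = 4 * d 1 1"
    "d 7 7 = 5 * d 1 1"
proof -
  have z_1_2: "d 1 2 = 0" by (rule tri_zero[OF tr]) (simp_all add: degv_def)
  have z_1_3: "d 1 3 = 0" by (rule tri_zero[OF tr]) (simp_all add: degv_def)
  have z_1_4: "d 1 4 = 0" by (rule tri_zero[OF tr]) (simp_all add: degv_def)
  have z_1_5: "d 1 5 = 0" by (rule tri_zero[OF tr]) (simp_all add: degv_def)
  have z_1_6: "d 1 6 = 0" by (rule tri_zero[OF tr]) (simp_all add: degv_def)
  have z_1_7: "d 1 7 = 0" by (rule tri_zero[OF tr]) (simp_all add: degv_def)
  have z_2_3: "d 2 3 = 0" by (rule tri_zero[OF tr]) (simp_all add: degv_def)
  have z_2_4: "d 2 4 = 0" by (rule tri_zero[OF tr]) (simp_all add: degv_def)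
  have z_2_5: "d 2 5 = 0" by (rule tri_zero[OF tr]) (simp_all add: degv_def)
  have z_2_6: "d 2 6 = 0" by (rule tri_zero[OF tr]) (simp_all add: degv_def)
  have z_2_7: "d 2 7 = 0" by (rule tri_zero[OF tr]) (simp_all add: degv_def)
  have z_3_2: "d 3 2 = 0" by (rule tri_zero[OF tr]) (simp_all add: degv_def)
  have z_3_4: "d 3 4 = 0" by (rule tri_zero[OF tr]) (simp_all add: degv_def)
  have z_3_5: "d 3 5 = 0" by (rule tri_zero[OF tr]) (simp_all add: degv_def)
  have z_3_6: "d 3 6 = 0" by (rule tri_zero[OF tr]) (simp_all add: degv_def)
  have z_3_7: "d 3 7 = 0" by (rule tri_zero[OF tr]) (simp_all add: degv_def)
  have z_4_5: "d 4 5 = 0" by (rule tri_zero[OF tr]) (simp_all add: degv_def)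
  have z_4_6: "d 4 6 = 0" by (rule tri_zero[OF tr]) (simp_all add: degv_def)
  have z_4_7: "d 4 7 = 0" by (rule tri_zero[OF tr]) (simp_all add: degv_def)
  have z_5_4: "d 5 4 = 0" by (rule tri_zero[OF tr]) (simp_all add: degv_def)
  have z_5_6: "d 5 6 = 0" by (rule tri_zero[OF tr]) (simp_all add: degv_def)
  have z_5_7: "d 5 7 = 0" by (rule tri_zero[OF tr]) (simp_all add: degv_def)
  have z_6_7: "d 6 7 = 0" by (rule tri_zero[OF tr]) (simp_all add: degv_def)
  have g_2: "d 2 2 = 2 * d 1 1" using tri_diag[OF tr, of 2] by (simp add: degv_def)
  have g_3: "d 3 3 = 2 * d 1 1" using tri_diag[OF tr, of 3] by (simp add: degv_def)
  have g_4: "d 4 4 = 3 * d 1 1" using tri_diag[OF tr, of 4] by (simp add: degv_def)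
  have g_5: "d 5 5 = 3 * d 1 1" using tri_diag[OF tr, of 5] by (simp add: degv_def)
  have g_6: "d 6 6 = 4 * d 1 1" using tri_diag[OF tr, of 6] by (simp add: degv_def)
  have g_7: "d 7 7 = 5 * d 1 1" using tri_diag[OF tr, of 7] by (simp add: degv_def)
  show "d 1 2 = 0" "d 1 3 = 0" "d 1 4 = 0" "d 1 5 = 0" "d 1 6 = 0" "d 1 7 = 0" "d 2 3 = 0" "d 2 4 = 0" "d 2 5 = 0" "d 2 6 = 0" "d 2 7 = 0" "d 3 2 = 0" "d 3 4 = 0" "d 3 5 = 0" "d 3 6 = 0" "d 3 7 = 0" "d 4 5 = 0" "d 4 6 = 0" "d 4 7 = 0" "d 5 4 = 0" "d 5 6 = 0" "d 5 7 = 0" "d 6 7 = 0" "d 2 2 = 2 * d 1 1" "d 3 3 = 2 * d 1 1" "d 4 4 = 3 * d 1 1" "d 5 5 = 3 * d 1 1" "d 6 6 = 4 * d 1 1" "d 7 7 = 5 * d 1 1" using z_1_2 z_1_3 z_1_4 z_1_5 z_1_6 z_1_7 z_2_3 z_2_4 z_2_5 z_2_6 z_2_7 z_3_2 z_3_4 z_3_5 z_3_6 z_3_7 z_4_5 z_4_6 z_4_7 z_5_4 z_5_6 z_5_7 z_6_7 g_2 g_3 g_4 g_5 g_6 g_7 by auto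
qed

lemma eig_1:
  assumes tr: "tri d" and t: "d 1 1 \<noteq> 0" and Dx: "\<And>x i. (D x) $ i = (\<Sum>j\<in>UNIV. d i j * x $ j)"
  shows "\<exists>f. D f = (1 * d 1 1) *\<^sub>R f \<and> f $ 1 = 1"
proof -
  note tf = tri_facts[OF tr]
  define x1 :: real where "x1 = 1"
  define x2 :: real where "x2 = (d 2 1 * x1) / (d 1 1 * (1 - 2))"
  define x3 :: real where "x3 = (d 3 1 * x1 + d 3 2 * x2) / (d 1 1 * (1 - 2))"
  define x4 :: real where "x4 = (d 4 1 * x1 + d 4 2 * x2 + d 4 3 * x3) / (d 1 1 * (1 - 3))"
  define x5 :: real where "x5 = (d 5 1 * x1 + d 5 2 * x2 + d 5 3 * x3 + d 5 4 * x4) / (d 1 1 * (1 - 3))"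
  define x6 :: real where "x6 = (d 6 1 * x1 + d 6 2 * x2 + d 6 3 * x3 + d 6 4 * x4 + d 6 5 * x5) / (d 1 1 * (1 - 4))"
  define x7 :: real where "x7 = (d 7 1 * x1 + d 7 2 * x2 + d 7 3 * x3 + d 7 4 * x4 + d 7 5 * x5 + d 7 6 * x6) / (d 1 1 * (1 - 5))"
  define f where "f = vec7 x1 x2 x3 x4 x5 x6 x7"
  have c1: "D f $ 1 = (1 * d 1 1) * f $ 1"
    unfolding Dx sum7 f_def by (simp add: tf t x1_def field_simps)
  have c2: "D f $ 2 = (1 * d 1 1) * f $ 2"
    unfolding Dx sum7 f_def by (simp add: tf t x1_def x2_def field_simps)
  have c3: "D f $ 3 = (1 * d 1 1) * f $ 3"
    unfolding Dx sum7 f_def by (simp add: tf t x1_def x3_def field_simps)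
  have c4: "D f $ 4 = (1 * d 1 1) * f $ 4"
    unfolding Dx sum7 f_def by (simp add: tf t x1_def x4_def field_simps)
  have c5: "D f $ 5 = (1 * d 1 1) * f $ 5"
    unfolding Dx sum7 f_def by (simp add: tf t x1_def x5_def field_simps)
  have c6: "D f $ 6 = (1 * d 1 1) * f $ 6"
    unfolding Dx sum7 f_def by (simp add: tf t x1_def x6_def field_simps)
  have c7: "D f $ 7 = (1 * d 1 1) * f $ 7"
    unfolding Dx sum7 f_def by (simp add: tf t x1_def x7_def field_simps)
  have "D f = (1 * d 1 1) *\<^sub>R f" unfolding vec_eq_iff all7 using c1 c2 c3 c4 c5 c6 c7 by simp
  then show ?thesis by (intro exI[of _ f]) (simp add: f_def x1_def)
qed

lemma eig_2:
  assumes tr: "tri d" and t: "d 1 1 \<noteq> 0" and Dx: "\<And>x i. (D x) $ i = (\<Sum>j\<in>UNIV. d i j * x $ j)"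
  shows "\<exists>f. D f = (2 * d 1 1) *\<^sub>R f \<and> f $ 2 = 1 \<and> f $ 1 = 0 \<and> f $ 3 = 0"
proof -
  note tf = tri_facts[OF tr]
  define x1 :: real where "x1 = 0"
  define x2 :: real where "x2 = 1"
  define x3 :: real where "x3 = 0"
  define x4 :: real where "x4 = (d 4 1 * x1 + d 4 2 * x2 + d 4 3 * x3) / (d 1 1 * (2 - 3))"
  define x5 :: real where "x5 = (d 5 1 * x1 + d 5 2 * x2 + d 5 3 * x3 + d 5 4 * x4) / (d 1 1 * (2 - 3))"
  define x6 :: real where "x6 = (d 6 1 * x1 + d 6 2 * x2 + d 6 3 * x3 + d 6 4 * x4 + d 6 5 * x5) / (d 1 1 * (2 - 4))"
  define x7 :: real where "x7 = (d 7 1 * x1 + d 7 2 * x2 + d 7 3 * x3 + d 7 4 * x4 + d 7 5 * x5 + d 7 6 * x6) / (d 1 1 * (2 - 5))"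
  define f where "f = vec7 x1 x2 x3 x4 x5 x6 x7"
  have c1: "D f $ 1 = (2 * d 1 1) * f $ 1"
    unfolding Dx sum7 f_def by (simp add: tf t x1_def x2_def x3_def field_simps)
  have c2: "D f $ 2 = (2 * d 1 1) * f $ 2"
    unfolding Dx sum7 f_def by (simp add: tf t x1_def x2_def x3_def field_simps)
  have c3: "D f $ 3 = (2 * d 1 1) * f $ 3"
    unfolding Dx sum7 f_def by (simp add: tf t x1_def x2_def x3_def field_simps)
  have c4: "D f $ 4 = (2 * d 1 1) * f $ 4"
    unfolding Dx sum7 f_def by (simp add: tf t x1_def x2_def x3_def x4_def field_simps)
  have c5: "D f $ 5 = (2 * d 1 1) * f $ 5"
    unfolding Dx sum7 f_def by (simp add: tf t x1_def x2_def x3_def x5_def field_simps)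
  have c6: "D f $ 6 = (2 * d 1 1) * f $ 6"
    unfolding Dx sum7 f_def by (simp add: tf t x1_def x2_def x3_def x6_def field_simps)
  have c7: "D f $ 7 = (2 * d 1 1) * f $ 7"
    unfolding Dx sum7 f_def by (simp add: tf t x1_def x2_def x3_def x7_def field_simps)
  have "D f = (2 * d 1 1) *\<^sub>R f" unfolding vec_eq_iff all7 using c1 c2 c3 c4 c5 c6 c7 by simp
  then show ?thesis by (intro exI[of _ f]) (simp add: f_def x1_def x2_def x3_def)
qed

lemma eig_3:
  assumes tr: "tri d" and t: "d 1 1 \<noteq> 0" and Dx: "\<And>x i. (D x) $ i = (\<Sum>j\<in>UNIV. d i j * x $ j)"
  shows "\<exists>f. D f = (2 * d 1 1) *\<^sub>R f \<and> f $ 3 = 1 \<and> f $ 1 = 0 \<and> f $ 2 = 0"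
proof -
  note tf = tri_facts[OF tr]
  define x1 :: real where "x1 = 0"
  define x2 :: real where "x2 = 0"
  define x3 :: real where "x3 = 1"
  define x4 :: real where "x4 = (d 4 1 * x1 + d 4 2 * x2 + d 4 3 * x3) / (d 1 1 * (2 - 3))"
  define x5 :: real where "x5 = (d 5 1 * x1 + d 5 2 * x2 + d 5 3 * x3 + d 5 4 * x4) / (d 1 1 * (2 - 3))"
  define x6 :: real where "x6 = (d 6 1 * x1 + d 6 2 * x2 + d 6 3 * x3 + d 6 4 * x4 + d 6 5 * x5) / (d 1 1 * (2 - 4))"
  define x7 :: real where "x7 = (d 7 1 * x1 + d 7 2 * x2 + d 7 3 * x3 + d 7 4 * x4 + d 7 5 * x5 + d 7 6 * x6) / (d 1 1 * (2 - 5))"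
  define f where "f = vec7 x1 x2 x3 x4 x5 x6 x7"
  have c1: "D f $ 1 = (2 * d 1 1) * f $ 1"
    unfolding Dx sum7 f_def by (simp add: tf t x1_def x2_def x3_def field_simps)
  have c2: "D f $ 2 = (2 * d 1 1) * f $ 2"
    unfolding Dx sum7 f_def by (simp add: tf t x1_def x2_def x3_def field_simps)
  have c3: "D f $ 3 = (2 * d 1 1) * f $ 3"
    unfolding Dx sum7 f_def by (simp add: tf t x1_def x2_def x3_def field_simps)
  have c4: "D f $ 4 = (2 * d 1 1) * f $ 4"
    unfolding Dx sum7 f_def by (simp add: tf t x1_def x2_def x3_def x4_def field_simps)
  have c5: "D f $ 5 = (2 * d 1 1) * f $ 5"
    unfolding Dx sum7 f_def by (simp add: tf t x1_def x2_def x3_def x5_def field_simps)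
  have c6: "D f $ 6 = (2 * d 1 1) * f $ 6"
    unfolding Dx sum7 f_def by (simp add: tf t x1_def x2_def x3_def x6_def field_simps)
  have c7: "D f $ 7 = (2 * d 1 1) * f $ 7"
    unfolding Dx sum7 f_def by (simp add: tf t x1_def x2_def x3_def x7_def field_simps)
  have "D f = (2 * d 1 1) *\<^sub>R f" unfolding vec_eq_iff all7 using c1 c2 c3 c4 c5 c6 c7 by simp
  then show ?thesis by (intro exI[of _ f]) (simp add: f_def x1_def x2_def x3_def)
qed

lemma eig_4:
  assumes tr: "tri d" and t: "d 1 1 \<noteq> 0" and Dx: "\<And>x i. (D x) $ i = (\<Sum>j\<in>UNIV. d i j * x $ j)"
  shows "\<exists>f. D f = (3 * d 1 1) *\<^sub>R f \<and> f $ 4 = 1 \<and> f $ 1 = 0 \<and> f $ 2 = 0 \<and> f $ 3 = 0 \<and> f $ 5 = 0"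
proof -
  note tf = tri_facts[OF tr]
  define x1 :: real where "x1 = 0"
  define x2 :: real where "x2 = 0"
  define x3 :: real where "x3 = 0"
  define x4 :: real where "x4 = 1"
  define x5 :: real where "x5 = 0"
  define x6 :: real where "x6 = (d 6 1 * x1 + d 6 2 * x2 + d 6 3 * x3 + d 6 4 * x4 + d 6 5 * x5) / (d 1 1 * (3 - 4))"
  define x7 :: real where "x7 = (d 7 1 * x1 + d 7 2 * x2 + d 7 3 * x3 + d 7 4 * x4 + d 7 5 * x5 + d 7 6 * x6) / (d 1 1 * (3 - 5))"
  define f where "f = vec7 x1 x2 x3 x4 x5 x6 x7"
  have c1: "D f $ 1 = (3 * d 1 1) * f $ 1"
    unfolding Dx sum7 f_def by (simp add: tf t x1_def x2_def x3_def x4_def x5_def field_simps)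
  have c2: "D f $ 2 = (3 * d 1 1) * f $ 2"
    unfolding Dx sum7 f_def by (simp add: tf t x1_def x2_def x3_def x4_def x5_def field_simps)
  have c3: "D f $ 3 = (3 * d 1 1) * f $ 3"
    unfolding Dx sum7 f_def by (simp add: tf t x1_def x2_def x3_def x4_def x5_def field_simps)
  have c4: "D f $ 4 = (3 * d 1 1) * f $ 4"
    unfolding Dx sum7 f_def by (simp add: tf t x1_def x2_def x3_def x4_def x5_def field_simps)
  have c5: "D f $ 5 = (3 * d 1 1) * f $ 5"
    unfolding Dx sum7 f_def by (simp add: tf t x1_def x2_def x3_def x4_def x5_def field_simps)
  have c6: "D f $ 6 = (3 * d 1 1) * f $ 6"
    unfolding Dx sum7 f_def by (simp add: tf t x1_def x2_def x3_def x4_def x5_def x6_def field_simps)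
  have c7: "D f $ 7 = (3 * d 1 1) * f $ 7"
    unfolding Dx sum7 f_def by (simp add: tf t x1_def x2_def x3_def x4_def x5_def x7_def field_simps)
  have "D f = (3 * d 1 1) *\<^sub>R f" unfolding vec_eq_iff all7 using c1 c2 c3 c4 c5 c6 c7 by simp
  then show ?thesis by (intro exI[of _ f]) (simp add: f_def x1_def x2_def x3_def x4_def x5_def)
qed

lemma eig_5:
  assumes tr: "tri d" and t: "d 1 1 \<noteq> 0" and Dx: "\<And>x i. (D x) $ i = (\<Sum>j\<in>UNIV. d i j * x $ j)"
  shows "\<exists>f. D f = (3 * d 1 1) *\<^sub>R f \<and> f $ 5 = 1 \<and> f $ 1 = 0 \<and> f $ 2 = 0 \<and> f $ 3 = 0 \<and> f $ 4 = 0"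
proof -
  note tf = tri_facts[OF tr]
  define x1 :: real where "x1 = 0"
  define x2 :: real where "x2 = 0"
  define x3 :: real where "x3 = 0"
  define x4 :: real where "x4 = 0"
  define x5 :: real where "x5 = 1"
  define x6 :: real where "x6 = (d 6 1 * x1 + d 6 2 * x2 + d 6 3 * x3 + d 6 4 * x4 + d 6 5 * x5) / (d 1 1 * (3 - 4))"
  define x7 :: real where "x7 = (d 7 1 * x1 + d 7 2 * x2 + d 7 3 * x3 + d 7 4 * x4 + d 7 5 * x5 + d 7 6 * x6) / (d 1 1 * (3 - 5))"
  define f where "f = vec7 x1 x2 x3 x4 x5 x6 x7"
  have c1: "D f $ 1 = (3 * d 1 1) * f $ 1"
    unfolding Dx sum7 f_def by (simp add: tf t x1_def x2_def x3_def x4_def x5_def field_simps)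
  have c2: "D f $ 2 = (3 * d 1 1) * f $ 2"
    unfolding Dx sum7 f_def by (simp add: tf t x1_def x2_def x3_def x4_def x5_def field_simps)
  have c3: "D f $ 3 = (3 * d 1 1) * f $ 3"
    unfolding Dx sum7 f_def by (simp add: tf t x1_def x2_def x3_def x4_def x5_def field_simps)
  have c4: "D f $ 4 = (3 * d 1 1) * f $ 4"
    unfolding Dx sum7 f_def by (simp add: tf t x1_def x2_def x3_def x4_def x5_def field_simps)
  have c5: "D f $ 5 = (3 * d 1 1) * f $ 5"
    unfolding Dx sum7 f_def by (simp add: tf t x1_def x2_def x3_def x4_def x5_def field_simps)
  have c6: "D f $ 6 = (3 * d 1 1) * f $ 6"
    unfolding Dx sum7 f_def by (simp add: tf t x1_def x2_def x3_def x4_def x5_def x6_def field_simps)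
  have c7: "D f $ 7 = (3 * d 1 1) * f $ 7"
    unfolding Dx sum7 f_def by (simp add: tf t x1_def x2_def x3_def x4_def x5_def x7_def field_simps)
  have "D f = (3 * d 1 1) *\<^sub>R f" unfolding vec_eq_iff all7 using c1 c2 c3 c4 c5 c6 c7 by simp
  then show ?thesis by (intro exI[of _ f]) (simp add: f_def x1_def x2_def x3_def x4_def x5_def)
qed

lemma eig_6:
  assumes tr: "tri d" and t: "d 1 1 \<noteq> 0" and Dx: "\<And>x i. (D x) $ i = (\<Sum>j\<in>UNIV. d i j * x $ j)"
  shows "\<exists>f. D f = (4 * d 1 1) *\<^sub>R f \<and> f $ 6 = 1 \<and> f $ 1 = 0 \<and> f $ 2 = 0 \<and> f $ 3 = 0 \<and> f $ 4 = 0 \<and> f $ 5 = 0"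
proof -
  note tf = tri_facts[OF tr]
  define x1 :: real where "x1 = 0"
  define x2 :: real where "x2 = 0"
  define x3 :: real where "x3 = 0"
  define x4 :: real where "x4 = 0"
  define x5 :: real where "x5 = 0"
  define x6 :: real where "x6 = 1"
  define x7 :: real where "x7 = (d 7 1 * x1 + d 7 2 * x2 + d 7 3 * x3 + d 7 4 * x4 + d 7 5 * x5 + d 7 6 * x6) / (d 1 1 * (4 - 5))"
  define f where "f = vec7 x1 x2 x3 x4 x5 x6 x7"
  have c1: "D f $ 1 = (4 * d 1 1) * f $ 1"
    unfolding Dx sum7 f_def by (simp add: tf t x1_def x2_def x3_def x4_def x5_def x6_def field_simps)
  have c2: "D f $ 2 = (4 * d 1 1) * f $ 2"
    unfolding Dx sum7 f_def by (simp add: tf t x1_def x2_def x3_def x4_def x5_def x6_def field_simps)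
  have c3: "D f $ 3 = (4 * d 1 1) * f $ 3"
    unfolding Dx sum7 f_def by (simp add: tf t x1_def x2_def x3_def x4_def x5_def x6_def field_simps)
  have c4: "D f $ 4 = (4 * d 1 1) * f $ 4"
    unfolding Dx sum7 f_def by (simp add: tf t x1_def x2_def x3_def x4_def x5_def x6_def field_simps)
  have c5: "D f $ 5 = (4 * d 1 1) * f $ 5"
    unfolding Dx sum7 f_def by (simp add: tf t x1_def x2_def x3_def x4_def x5_def x6_def field_simps)
  have c6: "D f $ 6 = (4 * d 1 1) * f $ 6"
    unfolding Dx sum7 f_def by (simp add: tf t x1_def x2_def x3_def x4_def x5_def x6_def field_simps)
  have c7: "D f $ 7 = (4 * d 1 1) * f $ 7"
    unfolding Dx sum7 f_def by (simp add: tf t x1_def x2_def x3_def x4_def x5_def x6_def x7_def field_simps)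
  have "D f = (4 * d 1 1) *\<^sub>R f" unfolding vec_eq_iff all7 using c1 c2 c3 c4 c5 c6 c7 by simp
  then show ?thesis by (intro exI[of _ f]) (simp add: f_def x1_def x2_def x3_def x4_def x5_def x6_def)
qed

definition nrm :: "(real^7 \<Rightarrow> real^7 \<Rightarrow> real) \<Rightarrow> real^7 \<Rightarrow> real^7" where
  "nrm ip v = (1 / sqrt (ip v v)) *\<^sub>R v"

lemma nrm_unit:
  assumes ipi: "is_inner_product ip" and v: "v \<noteq> 0"
  shows "ip (nrm ip v) (nrm ip v) = 1"
proof -
  have p: "ip v v > 0" using ip_pos[OF ipi v] .
  have s: "sqrt (ip v v) * sqrt (ip v v) = ip v v" using p by simp
  have "ip (nrm ip v) (nrm ip v) = ip v v / (sqrt (ip v v) * sqrt (ip v v))"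
    by (simp add: nrm_def ip_simps[OF ipi])
  then show ?thesis using s p by simp
qed

lemma eig_orth:
  assumes ipi: "is_inner_product ip" and Dsym: "\<And>x z. ip (D x) z = ip x (D z)"
    and v: "D v = a *\<^sub>R v" and w: "D w = b *\<^sub>R w" and ab: "a \<noteq> b"
  shows "ip v w = 0"
proof -
  have "a * ip v w = b * ip v w" using Dsym[of v w] v w by (simp add: ip_simps[OF ipi])
  then show ?thesis using ab by simp
qed

lemma parseval_y:
  fixes u y :: "7 \<Rightarrow> real^7"
  assumes ipi: "is_inner_product ip" and onb: "orthonormal_basis ip u" and ony: "orthonormal7 ip y"
  shows "ip a b = (\<Sum>k\<in>UNIV. ip a (y k) * ip b (y k))"
proof -
  have bl: "bilinear (\<lambda>x z. ip a x * ip b z)" by (rule bil_prod[OF ip_linR[OF ipi] ip_linR[OF ipi]])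
  have "ip a b = (\<Sum>k\<in>UNIV. ip a (u k) * ip b (u k))" by (rule onb_parseval[OF ipi onb])
  also have "\<dots> = (\<Sum>k\<in>UNIV. ip a (y k) * ip b (y k))" by (rule trace_inv[OF ipi onb ony bl])
  finally show ?thesis .
qed

lemma ricci_change:
  fixes u y :: "7 \<Rightarrow> real^7"
  assumes ipi: "is_inner_product ip" and onb: "orthonormal_basis ip u" and ony: "orthonormal7 ip y"
  shows "ricci_form brN ip u X X =
     - (1/2) * (\<Sum>i\<in>UNIV. \<Sum>j\<in>UNIV. ip (brN X (y i)) (y j) * ip (brN X (y i)) (y j))
     + (1/4) * (\<Sum>i\<in>UNIV. \<Sum>j\<in>UNIV. ip (brN (y i) (y j)) X * ip (brN (y i) (y j)) X)"
proof -
  have T1: "(\<Sum>i\<in>UNIV. \<Sum>j\<in>UNIV. ip (brN X (u i)) (u j) * ip (brN X (u i)) (u j))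
      = (\<Sum>i\<in>UNIV. \<Sum>j\<in>UNIV. ip (brN X (y i)) (y j) * ip (brN X (y i)) (y j))"
  proof -
    have "(\<Sum>i\<in>UNIV. \<Sum>j\<in>UNIV. ip (brN X (u i)) (u j) * ip (brN X (u i)) (u j))
        = (\<Sum>i\<in>UNIV. ip (brN X (u i)) (brN X (u i)))"
      by (simp add: onb_parseval[OF ipi onb, symmetric])
    also have "\<dots> = (\<Sum>i\<in>UNIV. ip (brN X (y i)) (brN X (y i)))"
      by (rule trace_inv[OF ipi onb ony bil_ip_comp[OF ipi brN_linR brN_linR]])
    also have "\<dots> = (\<Sum>i\<in>UNIV. \<Sum>j\<in>UNIV. ip (brN X (y i)) (y j) * ip (brN X (y i)) (y j))"
      by (simp add: parseval_y[OF ipi onb ony, symmetric])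
    finally show ?thesis .
  qed
  have lin1: "linear (\<lambda>x. ip (brN a x) X)" for a
    by (rule linear_comp_apply[OF ip_linL[OF ipi] brN_linR])
  have lin2: "linear (\<lambda>x. ip (brN x a) X)" for a
    by (rule linear_comp_apply[OF ip_linL[OF ipi] brN_linL])
  have T2: "(\<Sum>i\<in>UNIV. \<Sum>j\<in>UNIV. ip (brN (u i) (u j)) X * ip (brN (u i) (u j)) X)
      = (\<Sum>i\<in>UNIV. \<Sum>j\<in>UNIV. ip (brN (y i) (y j)) X * ip (brN (y i) (y j)) X)"
  proof -
    have "(\<Sum>i\<in>UNIV. \<Sum>j\<in>UNIV. ip (brN (u i) (u j)) X * ip (brN (u i) (u j)) X)
        = (\<Sum>i\<in>UNIV. \<Sum>j\<in>UNIV. ip (brN (u i) (y j)) X * ip (brN (u i) (y j)) X)"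
      by (rule sum.cong[OF refl], rule trace_inv[OF ipi onb ony bil_prod[OF lin1 lin1]])
    also have "\<dots> = (\<Sum>j\<in>UNIV. \<Sum>i\<in>UNIV. ip (brN (u i) (y j)) X * ip (brN (u i) (y j)) X)"
      by (rule sum.swap)
    also have "\<dots> = (\<Sum>j\<in>UNIV. \<Sum>i\<in>UNIV. ip (brN (y i) (y j)) X * ip (brN (y i) (y j)) X)"
      by (rule sum.cong[OF refl], rule trace_inv[OF ipi onb ony bil_prod[OF lin2 lin2]])
    also have "\<dots> = (\<Sum>i\<in>UNIV. \<Sum>j\<in>UNIV. ip (brN (y i) (y j)) X * ip (brN (y i) (y j)) X)"
      by (rule sum.swap)
    finally show ?thesis .
  qed
  show ?thesis by (simp only: ricci_form_def T1 T2)
qed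

section \<open>The weighted sum argument\<close>

definition wt :: "7 \<Rightarrow> real" where
  "wt k = (if k = 1 then 1 else if k = 2 then -2 else if k = 3 then 2
           else if k = 4 \<or> k = 5 then -1 else if k = 6 then 0 else 1)"

lemma wt_ok_all:
  "\<forall>i j k. degv k = degv i + degv j \<longrightarrow> \<not> (i = 1 \<and> j = 3) \<longrightarrow> \<not> (i = 3 \<and> j = 1)
     \<longrightarrow> i \<noteq> j \<longrightarrow> wt k - wt i - wt j \<ge> 0"
  unfolding all7 by (simp add: degv_def wt_def)

lemma wt_deg: "(\<Sum>l\<in>UNIV. wt l * (c + degv l * t)) = 0"
  by (simp add: sum7 wt_def degv_def algebra_simps)

lemma le_sum3:
  fixes F :: "7 \<Rightarrow> 7 \<Rightarrow> 7 \<Rightarrow> real"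
  assumes nn: "\<And>i j k. F i j k \<ge> 0"
  shows "F a b c \<le> (\<Sum>i\<in>UNIV. \<Sum>j\<in>UNIV. \<Sum>k\<in>UNIV. F i j k)"
proof -
  have "F a b c \<le> (\<Sum>k\<in>UNIV. F a b k)"
    by (rule member_le_sum) (auto intro: nn)
  also have "\<dots> \<le> (\<Sum>j\<in>UNIV. \<Sum>k\<in>UNIV. F a j k)"
    by (rule member_le_sum[of b UNIV "\<lambda>j. \<Sum>k\<in>UNIV. F a j k"]) (auto intro: sum_nonneg nn)
  also have "\<dots> \<le> (\<Sum>i\<in>UNIV. \<Sum>j\<in>UNIV. \<Sum>k\<in>UNIV. F i j k)"
    by (rule member_le_sum[of a UNIV "\<lambda>i. \<Sum>j\<in>UNIV. \<Sum>k\<in>UNIV. F i j k"]) (auto intro: sum_nonneg nn)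
  finally show ?thesis .
qed

lemma weighted_contra:
  fixes C :: "7 \<Rightarrow> 7 \<Rightarrow> 7 \<Rightarrow> real" and R :: "7 \<Rightarrow> real"
  assumes R: "\<And>l. R l = - (1/2) * (\<Sum>i\<in>UNIV. \<Sum>j\<in>UNIV. C l i j * C l i j)
                        + (1/4) * (\<Sum>i\<in>UNIV. \<Sum>j\<in>UNIV. C i j l * C i j l)"
    and anti: "\<And>i j k. C j i k = - C i j k"
    and grad: "\<And>i j k. degv k \<noteq> degv i + degv j \<Longrightarrow> C i j k = 0"
    and c13: "\<And>k. C 1 3 k = 0"
    and sumR: "(\<Sum>l\<in>UNIV. wt l * R l) = 0"
  shows "C 2 4 7 = 0" "C 2 5 7 = 0"
proof -
  define Q where "Q i j k = C i j k * C i j k" for i j k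
  have Qs: "Q j i k = Q i j k" for i j k unfolding Q_def using anti[of i j k] by simp
  define X1 where "X1 = (\<Sum>l\<in>UNIV. \<Sum>i\<in>UNIV. \<Sum>j\<in>UNIV. wt l * Q l i j)"
  define Xk where "Xk = (\<Sum>i\<in>UNIV. \<Sum>j\<in>UNIV. \<Sum>k\<in>UNIV. wt k * Q i j k)"
  define Xj where "Xj = (\<Sum>i\<in>UNIV. \<Sum>j\<in>UNIV. \<Sum>k\<in>UNIV. wt j * Q i j k)"
  have a1: "(\<Sum>l\<in>UNIV. wt l * R l) = - (1/2) * (\<Sum>l\<in>UNIV. wt l * (\<Sum>i\<in>UNIV. \<Sum>j\<in>UNIV. Q l i j))
        + (1/4) * (\<Sum>l\<in>UNIV. wt l * (\<Sum>i\<in>UNIV. \<Sum>j\<in>UNIV. Q i j l))"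
    by (simp add: R Q_def sum.distrib sum_distrib_left algebra_simps)
  have a2: "(\<Sum>l\<in>UNIV. wt l * (\<Sum>i\<in>UNIV. \<Sum>j\<in>UNIV. Q l i j)) = X1"
    unfolding X1_def by (simp add: sum_distrib_left)
  have a3: "(\<Sum>l\<in>UNIV. wt l * (\<Sum>i\<in>UNIV. \<Sum>j\<in>UNIV. Q i j l)) = Xk"
  proof -
    have "(\<Sum>l\<in>UNIV. wt l * (\<Sum>i\<in>UNIV. \<Sum>j\<in>UNIV. Q i j l)) = (\<Sum>l\<in>UNIV. \<Sum>i\<in>UNIV. \<Sum>j\<in>UNIV. wt l * Q i j l)"
      by (simp add: sum_distrib_left)
    also have "\<dots> = Xk" unfolding Xk_def by (rule swap3)
    finally show ?thesis .
  qed
  have a4: "Xj = X1"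
  proof -
    have "Xj = (\<Sum>j\<in>UNIV. \<Sum>i\<in>UNIV. \<Sum>k\<in>UNIV. wt j * Q i j k)" unfolding Xj_def by (rule sum.swap)
    also have "\<dots> = (\<Sum>j\<in>UNIV. \<Sum>i\<in>UNIV. \<Sum>k\<in>UNIV. wt j * Q j i k)" by (simp add: Qs)
    also have "\<dots> = X1" unfolding X1_def ..
    finally show ?thesis .
  qed
  define F where "F i j k = (wt k - wt i - wt j) * Q i j k" for i j k
  have sF: "(\<Sum>i\<in>UNIV. \<Sum>j\<in>UNIV. \<Sum>k\<in>UNIV. F i j k) = Xk - X1 - Xj"
    unfolding F_def X1_def Xk_def Xj_def
    by (simp add: left_diff_distrib sum_subtractf)
  have s0: "(\<Sum>i\<in>UNIV. \<Sum>j\<in>UNIV. \<Sum>k\<in>UNIV. F i j k) = 0"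
    using sumR a1 a2 a3 a4 sF by linarith
  have c31: "C 3 1 k = 0" for k using anti[of 1 3 k] c13[of k] by simp
  have cii: "C i i k = 0" for i k using anti[of i i k] by simp
  have nn: "F i j k \<ge> 0" for i j k
  proof (cases "C i j k = 0")
    case True then show ?thesis by (simp add: F_def Q_def)
  next
    case False
    then have "degv k = degv i + degv j" using grad by blast
    moreover have "\<not> (i = 1 \<and> j = 3)" "\<not> (i = 3 \<and> j = 1)" "i \<noteq> j"
      using False c13 c31 cii by auto
    ultimately have "wt k - wt i - wt j \<ge> 0" using wt_ok_all by blast
    then show ?thesis by (simp add: F_def Q_def)
  qed
  have f1: "F 2 4 7 \<le> 0" using le_sum3[of F, OF nn] s0 by simp
  have f2: "F 2 5 7 \<le> 0" using le_sum3[of F, OF nn] s0 by simp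
  have w1: "wt 7 - wt 2 - wt 4 = 4" "wt 7 - wt 2 - wt 5 = 4" by (simp_all add: wt_def)
  have sq: "x = 0" if "x * x \<le> 0" for x :: real
  proof -
    have "x * x = 0" using that zero_le_square[of x] by linarith
    then show ?thesis by simp
  qed
  show "C 2 4 7 = 0" using f1 w1 by (intro sq) (simp add: F_def Q_def)
  show "C 2 5 7 = 0" using f2 w1 by (intro sq) (simp add: F_def Q_def)
qed

theorem mainTheorem6:
  shows "\<not> einstein_nilradical brN"
proof
  assume "einstein_nilradical brN"
  then obtain ip where ipi: "is_inner_product ip" and ns: "is_nilsoliton brN ip"
    unfolding einstein_nilradical_def by blast
  from ns obtain u :: "7 \<Rightarrow> real^7" and Ric c D where onb: "orthonormal_basis ip u"
    and ric: "\<forall>X Y. ip (Ric X) Y = ricci_form brN ip u X Y"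
    and der: "is_derivation brN D" and RcD: "\<forall>X. Ric X = c *\<^sub>R X + D X"
    unfolding is_nilsoliton_def by blast
  have linD: "linear D" using der by (simp add: is_derivation_def)
  have Dbr: "D (brN x z) = brN (D x) z + brN x (D z)" for x z
    using der by (simp add: is_derivation_def)
  have ricD: "ricci_form brN ip u X Y = c * ip X Y + ip (D X) Y" for X Y
  proof -
    have "ricci_form brN ip u X Y = ip (Ric X) Y" using ric by simp
    also have "\<dots> = ip (c *\<^sub>R X + D X) Y" using RcD by simp
    finally show ?thesis by (simp add: ip_simps[OF ipi])
  qed
  have Dsym: "ip (D X) Y = ip X (D Y)" for X Y
  proof -
    have "ricci_form brN ip u X Y = ricci_form brN ip u Y X"
      unfolding ricci_form_def by (simp add: mult.commute)
    then have "c * ip X Y + ip (D X) Y = c * ip Y X + ip (D Y) X" by (simp only: ricD)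
    then show ?thesis using ip_sym[OF ipi, of X Y] ip_sym[OF ipi, of "D Y" X] by simp
  qed
  define d where "d i j = D (ee j) $ i" for i j
  have dd: "(\<lambda>i j. D (ee j) $ i) = d" by (simp add: d_def fun_eq_iff)
  have tr: "tri d" using der_tri[OF der] unfolding dd .
  have Dx: "\<And>x i. (D x) $ i = (\<Sum>j\<in>UNIV. d i j * x $ j)" unfolding d_def by (rule Dx[OF linD])
  note tf = tri_facts[OF tr]

  text \<open>Trace identities force the diagonal part of the derivation to be nonzero.\<close>
  have trace_c: "(\<Sum>l\<in>UNIV. ricci_form brN ip u (A (u l)) (u l))
      = c * (\<Sum>j\<in>UNIV. A (ee j) $ j) + (\<Sum>j\<in>UNIV. D (A (ee j)) $ j)" if linA: "linear A" for A
  proof -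
    have "(\<Sum>l\<in>UNIV. ricci_form brN ip u (A (u l)) (u l))
        = (\<Sum>l\<in>UNIV. c * ip (A (u l)) (u l) + ip (D (A (u l))) (u l))" by (simp add: ricD)
    also have "\<dots> = c * (\<Sum>l\<in>UNIV. ip (A (u l)) (u l)) + (\<Sum>l\<in>UNIV. ip (D (A (u l))) (u l))"
      by (simp add: sum.distrib sum_distrib_left)
    also have "\<dots> = c * (\<Sum>j\<in>UNIV. A (ee j) $ j) + (\<Sum>j\<in>UNIV. D (A (ee j)) $ j)"
      using trace_e[OF ipi onb linA] trace_e[OF ipi onb linear_comp_apply[OF linD linA]] by simp
    finally show ?thesis .
  qed
  have linphi: "linear phi0" using phi0_der by (simp add: is_derivation_def)
  have pe: "phi0 (ee j) = degv j *\<^sub>R ee j" for j by (simp add: phi0_def vec_eq_iff ee_comp)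
  have dfold: "D (ee j) $ i = d i j" for i j by (simp add: d_def)
  have p1: "(\<Sum>j\<in>UNIV. phi0 (ee j) $ j) = 20" by (simp add: pe sum7 ee_comp degv_def)
  have p2: "(\<Sum>j\<in>UNIV. D (phi0 (ee j)) $ j) = 68 * d 1 1"
    by (simp add: pe linear_scale[OF linD] dfold sum7 tf degv_def)
  have i1: "(\<Sum>j\<in>UNIV. ee j $ j) = 7" by (simp add: sum7 ee_comp)
  have i2: "(\<Sum>j\<in>UNIV. D (ee j) $ j) = 20 * d 1 1"
    by (simp add: dfold sum7 tf)
  have eq1: "c * 20 + 68 * d 1 1 = 0"
    using ricci_trace_der[OF ipi onb phi0_der] trace_c[OF linphi] p1 p2 by simp
  define S where "S = (\<Sum>l\<in>UNIV. \<Sum>i\<in>UNIV. ip (brN (u l) (u i)) (brN (u l) (u i)))"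
  have eq2: "- (1/4) * S = c * 7 + 20 * d 1 1"
    using ricci_trace_id[OF ipi onb] trace_c[OF linear_id] i1 i2 by (simp add: S_def id_def)
  have Sge: "S \<ge> 0" unfolding S_def by (intro sum_nonneg ip_nonneg[OF ipi])
  have Sne: "S \<noteq> 0"
  proof
    assume S0: "S = 0"
    have inner0: "(\<Sum>i\<in>UNIV. ip (brN (u l) (u i)) (brN (u l) (u i))) = 0" for l
      using S0 unfolding S_def
      by (subst (asm) sum_nonneg_eq_0_iff) (auto intro: sum_nonneg ip_nonneg[OF ipi])
    have z: "ip (brN (u l) (u i)) (brN (u l) (u i)) = 0" for l i
      using inner0[of l] by (subst (asm) sum_nonneg_eq_0_iff) (auto intro: ip_nonneg[OF ipi])
    have zb: "brN (u l) (u i) = 0" for l i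
      using z[of l i] ip_pos[OF ipi, of "brN (u l) (u i)"] by force
    have "brN (ee 1) (ee 2) = brN (\<Sum>l\<in>UNIV. ip (ee 1) (u l) *\<^sub>R u l) (\<Sum>i\<in>UNIV. ip (ee 2) (u i) *\<^sub>R u i)"
      using onb_expand[OF ipi onb, of "ee 1"] onb_expand[OF ipi onb, of "ee 2"] by simp
    also have "\<dots> = 0" by (simp add: brN_sumL brN_sumR brN_scaleL brN_scaleR zb)
    finally have "brN (ee 1) (ee 2) $ 4 = 0" by simp
    moreover have "brN (ee 1) (ee 2) $ 4 = 1" by (simp add: brN_comp ee_comp)
    ultimately show False by simp
  qed
  have tpos: "d 1 1 > 0" using eq1 eq2 Sge Sne by linarith
  have t0: "d 1 1 \<noteq> 0" using tpos by simp

  text \<open>An adapted orthonormal basis of eigenvectors of the soliton derivation.\<close>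
  obtain f1 where Df1: "D f1 = (1 * d 1 1) *\<^sub>R f1" and f1c: "f1 $ 1 = 1"
    using eig_1[OF tr t0 Dx] by blast
  obtain f2 where Df2: "D f2 = (2 * d 1 1) *\<^sub>R f2" and f2c: "f2 $ 2 = 1" "f2 $ 1 = 0" "f2 $ 3 = 0"
    using eig_2[OF tr t0 Dx] by blast
  obtain f3 where Df3: "D f3 = (2 * d 1 1) *\<^sub>R f3" and f3c: "f3 $ 3 = 1" "f3 $ 1 = 0" "f3 $ 2 = 0"
    using eig_3[OF tr t0 Dx] by blast
  obtain f4 where Df4: "D f4 = (3 * d 1 1) *\<^sub>R f4"
    and f4c: "f4 $ 4 = 1" "f4 $ 1 = 0" "f4 $ 2 = 0" "f4 $ 3 = 0" "f4 $ 5 = 0"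
    using eig_4[OF tr t0 Dx] by blast
  obtain f5 where Df5: "D f5 = (3 * d 1 1) *\<^sub>R f5"
    and f5c: "f5 $ 5 = 1" "f5 $ 1 = 0" "f5 $ 2 = 0" "f5 $ 3 = 0" "f5 $ 4 = 0"
    using eig_5[OF tr t0 Dx] by blast
  obtain f6 where Df6: "D f6 = (4 * d 1 1) *\<^sub>R f6" and f6c: "f6 $ 6 = 1"
    using eig_6[OF tr t0 Dx] by blast
  have De7: "D (ee 7) = (5 * d 1 1) *\<^sub>R ee 7"
    by (simp add: vec_eq_iff all7 Dx sum7 ee_comp tf)
  define k23 where "k23 = ip f2 f3 / ip f3 f3"
  define g2 where "g2 = f2 - k23 *\<^sub>R f3"
  define k54 where "k54 = ip f5 f4 / ip f4 f4"
  define g5 where "g5 = f5 - k54 *\<^sub>R f4"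
  have Dg2: "D g2 = (2 * d 1 1) *\<^sub>R g2"
    by (simp add: g2_def linear_diff[OF linD] linear_scale[OF linD] Df2 Df3 algebra_simps)
  have Dg5: "D g5 = (3 * d 1 1) *\<^sub>R g5"
    by (simp add: g5_def linear_diff[OF linD] linear_scale[OF linD] Df4 Df5 algebra_simps)
  have g2c: "g2 $ 1 = 0" "g2 $ 2 = 1" "g2 $ 3 = - k23" by (simp_all add: g2_def f2c f3c)
  have g5c: "g5 $ 1 = 0" "g5 $ 2 = 0" "g5 $ 3 = 0" "g5 $ 4 = - k54" "g5 $ 5 = 1"
    by (simp_all add: g5_def f5c f4c)
  have nz: "f1 \<noteq> 0" "g2 \<noteq> 0" "f3 \<noteq> 0" "f4 \<noteq> 0" "g5 \<noteq> 0" "f6 \<noteq> 0" "ee 7 \<noteq> 0"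
  proof -
    have nzc: "v \<noteq> 0" if "v $ i = 1" for v :: "real^7" and i using that by auto
    have "ee 7 $ 7 = 1" by (simp add: ee_comp)
    then show "f1 \<noteq> 0" "g2 \<noteq> 0" "f3 \<noteq> 0" "f4 \<noteq> 0" "g5 \<noteq> 0" "f6 \<noteq> 0" "ee 7 \<noteq> 0"
      using nzc[OF f1c] nzc[OF g2c(2)] nzc[OF f3c(1)] nzc[OF f4c(1)] nzc[OF g5c(5)] nzc[OF f6c]
        nzc[of "ee 7" 7] by auto
  qed
  have f3p: "ip f3 f3 > 0" using ip_pos[OF ipi nz(3)] .
  have f4p: "ip f4 f4 > 0" using ip_pos[OF ipi nz(4)] .
  have o23: "ip g2 f3 = 0" using f3p by (simp add: g2_def k23_def ip_simps[OF ipi])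
  have o54: "ip g5 f4 = 0" using f4p by (simp add: g5_def k54_def ip_simps[OF ipi])
  define y where "y k = (if k = 1 then nrm ip f1 else if k = 2 then nrm ip g2 else if k = 3 then nrm ip f3
     else if k = 4 then nrm ip f4 else if k = 5 then nrm ip g5 else if k = 6 then nrm ip f6 else nrm ip (ee 7))"
    for k :: 7
  have Dy: "D (y k) = (degv k * d 1 1) *\<^sub>R y k" for k
  proof -
    have "\<forall>k. D (y k) = (degv k * d 1 1) *\<^sub>R y k"
      unfolding all7 by (simp add: y_def nrm_def linear_scale[OF linD] Df1 Dg2 Df3 Df4 Dg5 Df6 De7 degv_def)
    then show ?thesis by blast
  qed
  have ydiag: "ip (y k) (y k) = 1" for k
  proof -
    have "\<forall>k. ip (y k) (y k) = 1"
      unfolding all7 by (simp add: y_def nrm_unit[OF ipi] nz)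
    then show ?thesis by blast
  qed
  have same: "\<forall>i j. degv i = degv j \<longrightarrow> i \<noteq> j \<longrightarrow>
      (i = 2 \<and> j = 3) \<or> (i = 3 \<and> j = 2) \<or> (i = 4 \<and> j = 5) \<or> (i = 5 \<and> j = 4)"
    unfolding all7 by (simp add: degv_def)
  have ony: "orthonormal7 ip y"
    unfolding orthonormal7_def
  proof (intro allI)
    fix i j
    show "ip (y i) (y j) = (if i = j then 1 else 0)"
    proof (cases "i = j")
      case True then show ?thesis by (simp add: ydiag)
    next
      case ij: False
      show ?thesis
      proof (cases "degv i = degv j")
        case False
        then have "degv i * d 1 1 \<noteq> degv j * d 1 1" using t0 by simp
        then show ?thesis using eig_orth[OF ipi Dsym Dy Dy] ij by simp
      next
        case True
        then have "(i = 2 \<and> j = 3) \<or> (i = 3 \<and> j = 2) \<or> (i = 4 \<and> j = 5) \<or> (i = 5 \<and> j = 4)"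
          using same ij by blast
        then show ?thesis
          using o23 o54 ip_sym[OF ipi, of f3 g2] ip_sym[OF ipi, of f4 g5]
          by (auto simp: y_def nrm_def ip_simps[OF ipi])
      qed
    qed
  qed

  define C where "C i j k = ip (brN (y i) (y j)) (y k)" for i j k
  have Dbry: "D (brN (y i) (y j)) = ((degv i + degv j) * d 1 1) *\<^sub>R brN (y i) (y j)" for i j
    by (simp add: Dbr Dy brN_scaleL brN_scaleR algebra_simps)
  have grad: "C i j k = 0" if "degv k \<noteq> degv i + degv j" for i j k
  proof -
    have "ip (D (brN (y i) (y j))) (y k) = ip (brN (y i) (y j)) (D (y k))" by (rule Dsym)
    then have "((degv i + degv j) * d 1 1) * C i j k = (degv k * d 1 1) * C i j k"
      by (simp add: Dbry Dy ip_simps[OF ipi] C_def)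
    then have "((degv i + degv j) - degv k) * d 1 1 * C i j k = 0" by (simp add: algebra_simps)
    then show ?thesis using that t0 by simp
  qed
  have anti: "C j i k = - C i j k" for i j k
    unfolding C_def using brN_antisym[of "y j" "y i"] by (simp add: ip_simps[OF ipi])
  have bf13: "brN f1 f3 = 0"
  proof -
    define w where "w = brN f1 f3"
    have "D w = d 1 1 *\<^sub>R w + (2 * d 1 1) *\<^sub>R w"
      by (simp add: w_def Dbr Df1 Df3 brN_scaleL brN_scaleR)
    also have "\<dots> = (d 1 1 + 2 * d 1 1) *\<^sub>R w" by (rule scaleR_add_left[symmetric])
    also have "d 1 1 + 2 * d 1 1 = 3 * d 1 1" by simp
    finally have Dw: "D w = (3 * d 1 1) *\<^sub>R w" .
    have wc: "w $ 1 = 0" "w $ 2 = 0" "w $ 3 = 0" "w $ 4 = 0" "w $ 5 = 0"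
      by (simp_all add: w_def brN_comp f3c)
    have "(D w) $ 6 = (3 * d 1 1) * w $ 6" using Dw by simp
    then have "4 * d 1 1 * w $ 6 = 3 * d 1 1 * w $ 6" by (simp add: Dx sum7 wc tf)
    then have w6: "w $ 6 = 0" using t0 by simp
    have "(D w) $ 7 = (3 * d 1 1) * w $ 7" using Dw by simp
    then have "5 * d 1 1 * w $ 7 = 3 * d 1 1 * w $ 7" by (simp add: Dx sum7 wc w6 tf)
    then have w7: "w $ 7 = 0" using t0 by simp
    have "w = 0" by (simp add: vec_eq_iff all7 wc w6 w7)
    then show ?thesis by (simp add: w_def)
  qed
  have c13: "C 1 3 k = 0" for k
    by (simp add: C_def y_def nrm_def brN_scaleL brN_scaleR bf13 ip_simps[OF ipi])

  define R where "R l = c + degv l * d 1 1" for l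
  have Rform: "R l = - (1/2) * (\<Sum>i\<in>UNIV. \<Sum>j\<in>UNIV. C l i j * C l i j)
                + (1/4) * (\<Sum>i\<in>UNIV. \<Sum>j\<in>UNIV. C i j l * C i j l)" for l
  proof -
    have "R l = ricci_form brN ip u (y l) (y l)"
      by (simp add: R_def ricD Dy ip_simps[OF ipi] ydiag)
    also have "\<dots> = - (1/2) * (\<Sum>i\<in>UNIV. \<Sum>j\<in>UNIV. C l i j * C l i j)
                + (1/4) * (\<Sum>i\<in>UNIV. \<Sum>j\<in>UNIV. C i j l * C i j l)"
      unfolding C_def by (rule ricci_change[OF ipi onb ony])
    finally show ?thesis .
  qed
  have sumR: "(\<Sum>l\<in>UNIV. wt l * R l) = 0" unfolding R_def by (rule wt_deg)
  have C247: "C 2 4 7 = 0" and C257: "C 2 5 7 = 0"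
    using weighted_contra[of R C, OF Rform anti grad c13 sumR] by blast+

  have V5: "brN a b $ 7 = 0" if Dab: "D (brN a b) = (5 * d 1 1) *\<^sub>R brN a b"
      and ip0: "ip (brN a b) (y 7) = 0" for a b
  proof -
    define w where "w = brN a b"
    have Dw: "D w = (5 * d 1 1) *\<^sub>R w" using Dab by (simp add: w_def)
    have wc: "w $ 1 = 0" "w $ 2 = 0" "w $ 3 = 0" "w $ 5 = 0"
      by (simp_all add: w_def brN_comp)
    have "(D w) $ 4 = (5 * d 1 1) * w $ 4" using Dw by simp
    then have "3 * d 1 1 * w $ 4 = 5 * d 1 1 * w $ 4" by (simp add: Dx sum7 wc tf)
    then have w4: "w $ 4 = 0" using t0 by simp
    have "(D w) $ 6 = (5 * d 1 1) * w $ 6" using Dw by simp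
    then have "4 * d 1 1 * w $ 6 = 5 * d 1 1 * w $ 6" by (simp add: Dx sum7 wc w4 tf)
    then have w6: "w $ 6 = 0" using t0 by simp
    have wexp: "w = (w $ 7) *\<^sub>R ee 7" by (simp add: vec_eq_iff all7 wc w4 w6 ee_comp)
    have e7p: "ip (ee 7) (ee 7) > 0" using ip_pos[OF ipi nz(7)] .
    have "ip w (y 7) = w $ 7 * (ip (ee 7) (ee 7) / sqrt (ip (ee 7) (ee 7)))"
      by (subst wexp) (simp add: y_def nrm_def ip_simps[OF ipi])
    moreover have "ip (ee 7) (ee 7) / sqrt (ip (ee 7) (ee 7)) > 0" using e7p by simp
    ultimately show ?thesis using ip0 e7p by (simp add: w_def)
  qed
  have b24: "brN (y 2) (y 4) $ 7 = 0"
    by (rule V5) (simp_all add: Dbry degv_def C247[unfolded C_def])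
  have b25: "brN (y 2) (y 5) $ 7 = 0"
    by (rule V5) (simp_all add: Dbry degv_def C257[unfolded C_def])
  have s2: "1 / sqrt (ip g2 g2) \<noteq> 0" using ip_pos[OF ipi nz(2)] by simp
  have s4: "1 / sqrt (ip f4 f4) \<noteq> 0" using ip_pos[OF ipi nz(4)] by simp
  have s5: "1 / sqrt (ip g5 g5) \<noteq> 0" using ip_pos[OF ipi nz(5)] by simp
  have "brN g2 f4 $ 7 = 0" using b24 s2 s4 by (simp add: y_def nrm_def brN_scaleL brN_scaleR)
  then have k1: "1 + k23 = 0" by (simp add: brN_comp g2c f4c)
  have "brN g2 g5 $ 7 = 0" using b25 s2 s5 by (simp add: y_def nrm_def brN_scaleL brN_scaleR)
  then have k2: "- k54 - k23 * k54 + k23 = 0" by (simp add: brN_comp g2c g5c algebra_simps)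
  have "k23 = -1" using k1 by simp
  then show False using k2 by simp
qed

end
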